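(* Let $0\le\tau\le\varepsilon$, $\lambda:=\tau/\varepsilon$, $u_n\in\mathcal V_{[0,1]}$. If $u$ is a minimiser of \[ \lambda\langle u,\mathbf{1} -u \rangle_{\mathcal V} + \|u-e^{-\tau\Delta}u_n\|^2_{\mathcal V} \] over $\{u\in\mathcal V_{[0,1]}:\mathcal M(u)=\mathcal M(u_n)\}$, then there exists $\beta\in\mathcal B(u)$ such that \[ u -e^{-\tau\Delta}u_n-\lambda u+\lambda\bar u\mathbf{1} =\lambda\beta -\lambda\bar\beta\mathbf{1}. \]
   Context: $G=(V,E)$ is a finite, simple, connected, undirected graph with weights $\omega_{ij}=\omega_{ji}>0$ for $ij\in E$, $\omega_{ij}=0$ otherwise; $d_i=\sum_j\omega_{ij}$, $r\in[0,1]$ fixed. $\mathcal V$ = functions $V\to\mathbb R$ with $\langle u,v\rangle_{\mathcal V}=\sum_i u_iv_id_i^r$ and norm $\|\cdot\|_{\mathcal V}$; $\mathcal V_{[0,1]}$ = functions $V\to[0,1]$. $(\Delta u)_i=d_i^{-r}\sum_j\omega_{ij}(u_i-u_j)$, $e^{-\tau\Delta}$ its matrix exponential. $\mathbf 1$ all-ones; $\mathcal M(u)=\langle u,\mathbf 1\rangle_{\mathcal V}$; $\bar v=\mathcal M(v)/\mathcal M(\mathbf 1)$. $\varepsilon>0$. For $u\in\mathcal V_{[0,1]}$, $\mathcal B(u)$ = set of $\beta\in\mathcal V$ with $\beta_i\ge0$ if $u_i=0$, $\beta_i=0$ if $0<u_i<1$, $\beta_i\le0$ if $u_i=1$. *)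

theory Defs
  imports "HOL-Analysis.Analysis"
begin

definition weighted_graph :: "('a::finite \<Rightarrow> 'a \<Rightarrow> real) \<Rightarrow> bool" where
  "weighted_graph w \<longleftrightarrow>
     (\<forall>i j. w i j = w j i) \<and> (\<forall>i j. 0 \<le> w i j) \<and> (\<forall>i. w i i = 0) \<and>
     (\<forall>i j. (i, j) \<in> {(x, y). 0 < w x y}\<^sup>*)"

definition deg :: "('a::finite \<Rightarrow> 'a \<Rightarrow> real) \<Rightarrow> 'a \<Rightarrow> real" where
  "deg w i = (\<Sum>j\<in>UNIV. w i j)"

text \<open>d_i^r, with the usual real-power convention 0^0 = 1.\<close>
definition degpow :: "('a::finite \<Rightarrow> 'a \<Rightarrow> real) \<Rightarrow> real \<Rightarrow> 'a \<Rightarrow> real" where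
  "degpow w r i = (if r = 0 then 1 else deg w i powr r)"

definition ipV :: "('a::finite \<Rightarrow> 'a \<Rightarrow> real) \<Rightarrow> real \<Rightarrow> ('a \<Rightarrow> real) \<Rightarrow> ('a \<Rightarrow> real) \<Rightarrow> real" where
  "ipV w r u v = (\<Sum>i\<in>UNIV. u i * v i * degpow w r i)"

definition normV :: "('a::finite \<Rightarrow> 'a \<Rightarrow> real) \<Rightarrow> real \<Rightarrow> ('a \<Rightarrow> real) \<Rightarrow> real" where
  "normV w r u = sqrt (ipV w r u u)"

definition V01 :: "('a::finite \<Rightarrow> real) set" where
  "V01 = {u. \<forall>i. 0 \<le> u i \<and> u i \<le> 1}"

definition graph_laplacian :: "('a::finite \<Rightarrow> 'a \<Rightarrow> real) \<Rightarrow> real \<Rightarrow> ('a \<Rightarrow> real) \<Rightarrow> ('a \<Rightarrow> real)" where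
  "graph_laplacian w r u = (\<lambda>i. inverse (degpow w r i) * (\<Sum>j\<in>UNIV. w i j * (u i - u j)))"

text \<open>Matrix exponential e^{-tau Delta} applied to u, via its defining power series
  sum_k (-tau)^k / k! Delta^k u (componentwise).\<close>
definition heat_op :: "('a::finite \<Rightarrow> 'a \<Rightarrow> real) \<Rightarrow> real \<Rightarrow> real \<Rightarrow> ('a \<Rightarrow> real) \<Rightarrow> ('a \<Rightarrow> real)" where
  "heat_op w r \<tau> u = (\<lambda>i. \<Sum>k. ((- \<tau>) ^ k / fact k) * (((graph_laplacian w r) ^^ k) u) i)"

definition massV :: "('a::finite \<Rightarrow> 'a \<Rightarrow> real) \<Rightarrow> real \<Rightarrow> ('a \<Rightarrow> real) \<Rightarrow> real" where
  "massV w r u = ipV w r u (\<lambda>_. 1)"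

definition meanV :: "('a::finite \<Rightarrow> 'a \<Rightarrow> real) \<Rightarrow> real \<Rightarrow> ('a \<Rightarrow> real) \<Rightarrow> real" where
  "meanV w r v = massV w r v / massV w r (\<lambda>_. 1)"

definition Bset :: "('a::finite \<Rightarrow> real) \<Rightarrow> ('a \<Rightarrow> real) set" where
  "Bset u = {\<beta>. \<forall>i. (u i = 0 \<longrightarrow> 0 \<le> \<beta> i) \<and> (0 < u i \<and> u i < 1 \<longrightarrow> \<beta> i = 0)
                      \<and> (u i = 1 \<longrightarrow> \<beta> i \<le> 0)}"

end

theory Submission
  imports Defs
begin

lemma lap_mass:
  assumes sym: "\<forall>i j. w i j = w j i" and pos: "\<forall>i. 0 < degpow w r i"
  shows "(\<Sum>i\<in>UNIV. graph_laplacian w r v i * degpow w r i) = 0"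
proof -
  have "(\<Sum>i\<in>UNIV. graph_laplacian w r v i * degpow w r i)
      = (\<Sum>i\<in>UNIV. \<Sum>j\<in>UNIV. w i j * v i) - (\<Sum>i\<in>UNIV. \<Sum>j\<in>UNIV. w i j * v j)"
  proof -
    have "graph_laplacian w r v i * degpow w r i = (\<Sum>j\<in>UNIV. w i j * v i) - (\<Sum>j\<in>UNIV. w i j * v j)" for i
      unfolding graph_laplacian_def using pos[rule_format, of i]
      by (simp add: sum_subtractf[symmetric] right_diff_distrib)
    then show ?thesis by (simp add: sum_subtractf)
  qed
  also have "(\<Sum>i\<in>UNIV. \<Sum>j\<in>UNIV. w i j * v j) = (\<Sum>j\<in>UNIV. \<Sum>i\<in>UNIV. w i j * v j)"
    by (rule sum.swap)
  also have "\<dots> = (\<Sum>i\<in>UNIV. \<Sum>j\<in>UNIV. w i j * v i)"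
    using sym by simp
  finally show ?thesis by simp
qed

definition N1 :: "('a::finite \<Rightarrow> real) \<Rightarrow> real" where
  "N1 v = (\<Sum>i\<in>UNIV. \<bar>v i\<bar>)"

lemma N1_ge: "\<bar>v i\<bar> \<le> N1 v"
  unfolding N1_def by (rule member_le_sum) auto

lemma lap_bound:
  assumes nn: "\<forall>i j. 0 \<le> w i j" and pos: "\<forall>i. 0 < degpow w r i"
  shows "N1 (graph_laplacian w r v) \<le> (\<Sum>i\<in>UNIV. inverse (degpow w r i) * (\<Sum>j\<in>UNIV. w i j) * 2) * N1 v"
proof -
  have "\<bar>graph_laplacian w r v i\<bar> \<le> inverse (degpow w r i) * (\<Sum>j\<in>UNIV. w i j) * 2 * N1 v" for i
  proof -
    have "\<bar>\<Sum>j\<in>UNIV. w i j * (v i - v j)\<bar> \<le> (\<Sum>j\<in>UNIV. \<bar>w i j * (v i - v j)\<bar>)"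
      by (rule sum_abs)
    also have "\<dots> \<le> (\<Sum>j\<in>UNIV. w i j * (2 * N1 v))"
    proof (rule sum_mono)
      fix j
      have "\<bar>v i - v j\<bar> \<le> 2 * N1 v" using N1_ge[of v i] N1_ge[of v j] by linarith
      then show "\<bar>w i j * (v i - v j)\<bar> \<le> w i j * (2 * N1 v)"
        using nn by (simp add: abs_mult mult_left_mono)
    qed
    also have "\<dots> = (\<Sum>j\<in>UNIV. w i j) * 2 * N1 v" by (simp add: sum_distrib_right mult.assoc)
    finally have *: "\<bar>\<Sum>j\<in>UNIV. w i j * (v i - v j)\<bar> \<le> (\<Sum>j\<in>UNIV. w i j) * 2 * N1 v" .
    have "\<bar>graph_laplacian w r v i\<bar> = inverse (degpow w r i) * \<bar>\<Sum>j\<in>UNIV. w i j * (v i - v j)\<bar>"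
      unfolding graph_laplacian_def using pos by (simp add: abs_mult less_imp_le)
    also have "\<dots> \<le> inverse (degpow w r i) * ((\<Sum>j\<in>UNIV. w i j) * 2 * N1 v)"
      using * pos by (intro mult_left_mono) (auto simp: less_imp_le)
    finally show ?thesis by (simp add: mult.assoc)
  qed
  then have "N1 (graph_laplacian w r v) \<le> (\<Sum>i\<in>UNIV. inverse (degpow w r i) * (\<Sum>j\<in>UNIV. w i j) * 2 * N1 v)"
    unfolding N1_def by (intro sum_mono) auto
  then show ?thesis by (simp add: sum_distrib_right)
qed

lemma lap_pow_bound:
  assumes nn: "\<forall>i j. 0 \<le> w i j" and pos: "\<forall>i. 0 < degpow w r i"
  shows "N1 ((graph_laplacian w r ^^ k) v) \<le> (\<Sum>i\<in>UNIV. inverse (degpow w r i) * (\<Sum>j\<in>UNIV. w i j) * 2) ^ k * N1 v"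
proof (induction k)
  case 0 then show ?case by simp
next
  case (Suc k)
  let ?C = "(\<Sum>i\<in>UNIV. inverse (degpow w r i) * (\<Sum>j\<in>UNIV. w i j) * 2)"
  have C: "0 \<le> ?C" using nn pos by (intro sum_nonneg mult_nonneg_nonneg) (auto intro: sum_nonneg less_imp_le)
  have "N1 ((graph_laplacian w r ^^ Suc k) v) \<le> ?C * N1 ((graph_laplacian w r ^^ k) v)"
    using lap_bound[OF nn pos] by simp
  also have "\<dots> \<le> ?C * (?C ^ k * N1 v)" using Suc C by (rule mult_left_mono)
  finally show ?case by (simp add: mult.assoc)
qed

lemma heat_summable:
  assumes nn: "\<forall>i j. 0 \<le> w i j" and pos: "\<forall>i. 0 < degpow w r i"
  shows "summable (\<lambda>k. ((- \<tau>) ^ k / fact k) * (((graph_laplacian w r) ^^ k) v) i)"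
proof -
  define C where "C = (\<Sum>i\<in>UNIV. inverse (degpow w r i) * (\<Sum>j\<in>UNIV. w i j) * 2)"
  have g: "summable (\<lambda>k. (inverse (fact k) * (\<bar>\<tau>\<bar> * C) ^ k) * N1 v)"
    by (intro summable_mult2 summable_exp)
  show ?thesis
  proof (rule summable_comparison_test'[OF g])
    fix k :: nat
    have "\<bar>((graph_laplacian w r) ^^ k) v i\<bar> \<le> C ^ k * N1 v"
      using N1_ge[of "((graph_laplacian w r) ^^ k) v" i] lap_pow_bound[OF nn pos, of k v]
      unfolding C_def by linarith
    then have "\<bar>\<tau>\<bar> ^ k / fact k * \<bar>((graph_laplacian w r) ^^ k) v i\<bar> \<le> \<bar>\<tau>\<bar> ^ k / fact k * (C ^ k * N1 v)"
      by (intro mult_left_mono) auto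
    then show "norm ((- \<tau>) ^ k / fact k * (graph_laplacian w r ^^ k) v i) \<le> inverse (fact k) * (\<bar>\<tau>\<bar> * C) ^ k * N1 v"
      by (simp add: abs_mult power_abs power_mult_distrib field_simps)
  qed
qed

lemma heat_mass:
  assumes sym: "\<forall>i j. w i j = w j i" and nn: "\<forall>i j. 0 \<le> w i j" and pos: "\<forall>i. 0 < degpow w r i"
  shows "(\<Sum>i\<in>UNIV. heat_op w r \<tau> v i * degpow w r i) = (\<Sum>i\<in>UNIV. v i * degpow w r i)"
proof -
  let ?a = "\<lambda>i k. ((- \<tau>) ^ k / fact k) * (((graph_laplacian w r) ^^ k) v) i * degpow w r i"
  have s: "summable (?a i)" for i
    by (rule summable_mult2[OF heat_summable[OF nn pos]])
  have "(\<Sum>i\<in>UNIV. heat_op w r \<tau> v i * degpow w r i) = (\<Sum>i\<in>UNIV. \<Sum>k. ?a i k)"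
    unfolding heat_op_def
    by (intro sum.cong refl suminf_mult2 heat_summable[OF nn pos])
  also have "\<dots> = (\<Sum>k. \<Sum>i\<in>UNIV. ?a i k)"
    by (rule suminf_sum[symmetric]) (rule s)
  also have "(\<lambda>k. \<Sum>i\<in>UNIV. ?a i k) = (\<lambda>k. if k = 0 then (\<Sum>i\<in>UNIV. v i * degpow w r i) else 0)"
  proof
    fix k
    have "(\<Sum>i\<in>UNIV. ?a i k) = ((- \<tau>) ^ k / fact k) * (\<Sum>i\<in>UNIV. (((graph_laplacian w r) ^^ k) v) i * degpow w r i)"
      by (simp add: sum_distrib_left mult.assoc)
    moreover have "k \<noteq> 0 \<Longrightarrow> (\<Sum>i\<in>UNIV. (((graph_laplacian w r) ^^ k) v) i * degpow w r i) = 0"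
      using lap_mass[OF sym pos] by (cases k) auto
    ultimately show "(\<Sum>i\<in>UNIV. ?a i k) = (if k = 0 then (\<Sum>i\<in>UNIV. v i * degpow w r i) else 0)"
      by auto
  qed
  also have "(\<Sum>k. (if k = 0 then (\<Sum>i\<in>UNIV. v i * degpow w r i) else 0)) = (\<Sum>i\<in>UNIV. v i * degpow w r i)"
    using sums_single[of 0 "\<lambda>_. (\<Sum>i\<in>UNIV. v i * degpow w r i)"] by (simp add: sums_iff)
  finally show ?thesis .
qed

lemma heat_zero: "heat_op w r 0 v = v"
proof
  fix i
  have "(\<lambda>k. ((- (0::real)) ^ k / fact k) * (((graph_laplacian w r) ^^ k) v) i) = (\<lambda>k. if k = 0 then v i else 0)"
    by (auto simp: power_0_left)
  then show "heat_op w r 0 v i = v i"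
    unfolding heat_op_def using sums_single[of 0 "\<lambda>_. v i"] by (simp add: sums_iff)
qed


lemma F_expand:
  assumes pos: "\<forall>i. 0 < degpow w r i"
  shows "lam * ipV w r v (\<lambda>i. 1 - v i) + (normV w r (\<lambda>i. v i - h i))\<^sup>2
     = (\<Sum>k\<in>UNIV. degpow w r k * (lam * v k * (1 - v k) + (v k - h k)\<^sup>2))"
proof -
  have "0 \<le> ipV w r (\<lambda>i. v i - h i) (\<lambda>i. v i - h i)"
    unfolding ipV_def
  proof (intro sum_nonneg)
    fix i
    have "0 \<le> (v i - h i) * (v i - h i)" by simp
    then show "0 \<le> (v i - h i) * (v i - h i) * degpow w r i"
      using pos by (simp add: less_imp_le)
  qed
  then have "(normV w r (\<lambda>i. v i - h i))\<^sup>2 = ipV w r (\<lambda>i. v i - h i) (\<lambda>i. v i - h i)"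
    unfolding normV_def by simp
  then show ?thesis unfolding ipV_def
    by (simp add: sum_distrib_left sum.distrib[symmetric] algebra_simps power2_eq_square)
qed

lemma F_diff:
  fixes m h u v :: "'a::finite \<Rightarrow> real"
  shows "(\<Sum>k\<in>UNIV. m k * (lam * v k * (1 - v k) + (v k - h k)\<^sup>2))
       - (\<Sum>k\<in>UNIV. m k * (lam * u k * (1 - u k) + (u k - h k)\<^sup>2))
     = (\<Sum>k\<in>UNIV. m k * (v k - u k) * (lam * (1 - 2 * u k) + 2 * (u k - h k)))
       + (1 - lam) * (\<Sum>k\<in>UNIV. m k * (v k - u k)\<^sup>2)"
  by (simp add: sum_subtractf[symmetric] sum_distrib_left sum.distrib[symmetric])
     (intro sum.cong refl; simp add: algebra_simps power2_eq_square)


lemma pairwise: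
  fixes m h u :: "'a::finite \<Rightarrow> real"
  assumes pos: "\<forall>i. 0 < m i" and lam1: "lam \<le> 1" and uV: "u \<in> V01"
    and min: "\<forall>v\<in>V01. (\<Sum>k\<in>UNIV. v k * m k) = (\<Sum>k\<in>UNIV. u k * m k) \<longrightarrow>
        (\<Sum>k\<in>UNIV. m k * (lam * u k * (1 - u k) + (u k - h k)\<^sup>2))
        \<le> (\<Sum>k\<in>UNIV. m k * (lam * v k * (1 - v k) + (v k - h k)\<^sup>2))"
    and ij: "i \<noteq> j" and ui: "u i < 1" and uj: "0 < u j"
  shows "lam * (1 - 2 * u j) + 2 * (u j - h j) \<le> lam * (1 - 2 * u i) + 2 * (u i - h i)"
proof (rule ccontr)
  define p where "p k = lam * (1 - 2 * u k) + 2 * (u k - h k)" for k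
  define a where "a = p i - p j"
  assume "\<not> ?thesis"
  then have a: "a < 0" unfolding a_def p_def by simp
  have mi: "0 < m i" and mj: "0 < m j" using pos by auto
  define T where "T = min ((1 - u i) * m i) (u j * m j)"
  have T: "0 < T" unfolding T_def using ui uj mi mj by simp
  define K where "K = (1 - lam) * (1 / m i + 1 / m j)"
  have K: "0 \<le> K" unfolding K_def using lam1 mi mj by simp
  define t where "t = min T ((- a) / (2 * (K + 1)))"
  have "0 < (- a) / (2 * (K + 1))" using a K by (intro divide_pos_pos) auto
  then have t: "0 < t" "t \<le> T" unfolding t_def using T by auto
  have tK: "t * K < - a"
  proof -
    have "t * K \<le> (- a) / (2 * (K + 1)) * K" unfolding t_def using K
      by (intro mult_right_mono) auto
    also have "\<dots> < - a" using K a mult_nonneg_nonpos[of K a] by (simp add: field_simps)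
    finally show ?thesis .
  qed
  define d where "d k = (if k = i then t / m i else 0) - (if k = j then t / m j else 0)" for k
  define v where "v k = u k + d k" for k
  have vV: "v \<in> V01"
  proof -
    have "0 \<le> v k \<and> v k \<le> 1" for k
    proof -
      have u01: "0 \<le> u k" "u k \<le> 1" using uV unfolding V01_def by auto
      have "t / m i \<le> 1 - u i" using t mi unfolding T_def by (simp add: field_simps)
      moreover have "t / m j \<le> u j" using t mj unfolding T_def by (simp add: field_simps)
      moreover have "0 \<le> t / m i" "0 \<le> t / m j" using t mi mj by auto
      ultimately show ?thesis unfolding v_def d_def using u01 ij by auto
    qed
    then show ?thesis unfolding V01_def by auto
  qed
  have md: "d k * m k = (if k = i then t else 0) - (if k = j then t else 0)" for k
    unfolding d_def using mi mj ij by auto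
  have "(\<Sum>k\<in>UNIV. v k * m k) = (\<Sum>k\<in>UNIV. u k * m k) + (\<Sum>k\<in>UNIV. d k * m k)"
    unfolding v_def by (simp add: algebra_simps sum.distrib)
  also have "(\<Sum>k\<in>UNIV. d k * m k) = 0" unfolding md by (simp add: sum_subtractf)
  finally have mass: "(\<Sum>k\<in>UNIV. v k * m k) = (\<Sum>k\<in>UNIV. u k * m k)" by simp
  have le: "0 \<le> (\<Sum>k\<in>UNIV. m k * (v k - u k) * p k) + (1 - lam) * (\<Sum>k\<in>UNIV. m k * (v k - u k)\<^sup>2)"
    using min[rule_format, OF vV mass] F_diff[of m lam v h u] unfolding p_def by linarith
  have s1: "m k * (v k - u k) * p k = (if k = i then t * p i else 0) - (if k = j then t * p j else 0)" for k
    unfolding v_def d_def using mi mj ij by auto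
  have s2: "m k * (v k - u k)\<^sup>2 = (if k = i then t\<^sup>2 / m i else 0) + (if k = j then t\<^sup>2 / m j else 0)" for k
    unfolding v_def d_def using mi mj ij by (auto simp: power2_eq_square)
  have "(\<Sum>k\<in>UNIV. m k * (v k - u k) * p k) = t * a"
    unfolding s1 a_def by (simp add: sum_subtractf algebra_simps)
  moreover have "(\<Sum>k\<in>UNIV. m k * (v k - u k)\<^sup>2) = t\<^sup>2 / m i + t\<^sup>2 / m j"
    unfolding s2 by (simp add: sum.distrib)
  ultimately have "0 \<le> t * a + t * (t * K)" using le unfolding K_def
    by (simp add: algebra_simps power2_eq_square)
  then have "0 \<le> t * (a + t * K)" by (simp add: algebra_simps)
  then have "0 \<le> a + t * K" using t by (simp add: zero_le_mult_iff)
  then show False using tK by linarith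
qed


theorem theorem32:
  fixes w :: "'a::finite \<Rightarrow> 'a \<Rightarrow> real"
    and r \<epsilon> \<tau> lam :: real
    and un u :: "'a \<Rightarrow> real"
  assumes graph: "weighted_graph w"
    and r: "0 \<le> r" "r \<le> 1"
    and ip_pos: "\<forall>i. 0 < degpow w r i"
    and eps: "0 < \<epsilon>"
    and tau: "0 \<le> \<tau>" "\<tau> \<le> \<epsilon>"
    and lam_def: "lam = \<tau> / \<epsilon>"
    and un: "un \<in> V01"
    and u_adm: "u \<in> V01" "massV w r u = massV w r un"
    and u_min: "\<forall>v\<in>V01. massV w r v = massV w r un \<longrightarrow>
        lam * ipV w r u (\<lambda>i. 1 - u i) + (normV w r (\<lambda>i. u i - heat_op w r \<tau> un i))\<^sup>2
          \<le> lam * ipV w r v (\<lambda>i. 1 - v i) + (normV w r (\<lambda>i. v i - heat_op w r \<tau> un i))\<^sup>2"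
  shows "\<exists>\<beta>\<in>Bset u. \<forall>i.
           u i - heat_op w r \<tau> un i - lam * u i + lam * meanV w r u
             = lam * \<beta> i - lam * meanV w r \<beta>"
proof -
  define m where "m = degpow w r"
  define h where "h = heat_op w r \<tau> un"
  have pos: "\<forall>i. 0 < m i" using ip_pos unfolding m_def by simp
  have sym: "\<forall>i j. w i j = w j i" and nn: "\<forall>i j. 0 \<le> w i j"
    using graph unfolding weighted_graph_def by auto
  have massE: "massV w r v = (\<Sum>k\<in>UNIV. v k * m k)" for v
    unfolding massV_def ipV_def m_def by simp
  have hmass: "(\<Sum>k\<in>UNIV. h k * m k) = (\<Sum>k\<in>UNIV. u k * m k)"
    using heat_mass[OF sym nn ip_pos, of \<tau> un] u_adm(2) unfolding h_def m_def massE by simp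
  have min: "\<forall>v\<in>V01. (\<Sum>k\<in>UNIV. v k * m k) = (\<Sum>k\<in>UNIV. u k * m k) \<longrightarrow>
        (\<Sum>k\<in>UNIV. m k * (lam * u k * (1 - u k) + (u k - h k)\<^sup>2))
        \<le> (\<Sum>k\<in>UNIV. m k * (lam * v k * (1 - v k) + (v k - h k)\<^sup>2))"
    using u_min u_adm(2) unfolding F_expand[OF ip_pos] massE h_def m_def by simp
  have lam0: "0 \<le> lam" and lam1: "lam \<le> 1" using tau eps unfolding lam_def by auto
  show ?thesis
  proof (cases "lam = 0")
    case True
    then have "\<tau> = 0" using eps unfolding lam_def by simp
    then have hun: "h = un" unfolding h_def by (simp add: heat_zero)
    have "(\<Sum>k\<in>UNIV. m k * (u k - h k)\<^sup>2) \<le> (\<Sum>k\<in>UNIV. m k * (un k - h k)\<^sup>2)"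
      using min[rule_format, OF un] u_adm(2) True unfolding massE by simp
    also have "\<dots> = 0" unfolding hun by simp
    finally have "(\<Sum>k\<in>UNIV. m k * (u k - h k)\<^sup>2) = 0"
    proof -
      have "0 \<le> (\<Sum>k\<in>UNIV. m k * (u k - h k)\<^sup>2)"
        using pos by (intro sum_nonneg) (simp add: less_imp_le)
      then show "(\<Sum>k\<in>UNIV. m k * (u k - h k)\<^sup>2) \<le> 0 \<Longrightarrow> ?thesis" by linarith
    qed
    then have z: "\<forall>k\<in>UNIV. m k * (u k - h k)\<^sup>2 = 0"
      using pos by (subst sum_nonneg_eq_0_iff[symmetric]) (auto simp: less_imp_le)
    have uh: "u k = h k" for k
    proof -
      have "m k * (u k - h k)\<^sup>2 = 0" using z by simp
      moreover have "m k \<noteq> 0" using pos[rule_format, of k] by simp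
      ultimately show ?thesis by simp
    qed
    have "(\<lambda>_. 0) \<in> Bset u" unfolding Bset_def by simp
    then show ?thesis using True uh unfolding h_def by (intro bexI[of _ "\<lambda>_. 0"]) auto
  next
    case False
    then have lam: "0 < lam" using lam0 by simp
    define p where "p k = lam * (1 - 2 * u k) + 2 * (u k - h k)" for k
    have pw: "p j \<le> p i" if "u i < 1" "0 < u j" for i j
    proof (cases "i = j")
      case True then show ?thesis by simp
    next
      case False
      show ?thesis unfolding p_def
        by (rule pairwise[OF pos lam1 u_adm(1) min False that])
    qed
    define P where "P = {j. 0 < u j}"
    define Q where "Q = {i. u i < 1}"
    define \<mu> where "\<mu> = (if P \<noteq> {} then Max (p ` P) else if Q \<noteq> {} then Min (p ` Q) else 0)"
    have mu: "(u i < 1 \<longrightarrow> \<mu> \<le> p i) \<and> (0 < u i \<longrightarrow> p i \<le> \<mu>)" for i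
    proof (cases "P \<noteq> {}")
      case True
      then have "\<mu> = Max (p ` P)" unfolding \<mu>_def by simp
      moreover have "u i < 1 \<longrightarrow> Max (p ` P) \<le> p i"
        using True pw unfolding P_def by (auto intro!: Max.boundedI)
      moreover have "0 < u i \<longrightarrow> p i \<le> Max (p ` P)"
        unfolding P_def by (auto intro!: Max_ge)
      ultimately show ?thesis by simp
    next
      case F: False
      then have ui: "\<not> 0 < u i" unfolding P_def by auto
      show ?thesis
      proof (cases "Q \<noteq> {}")
        case True
        then have "\<mu> = Min (p ` Q)" using F unfolding \<mu>_def by simp
        then show ?thesis using ui unfolding Q_def by (auto intro!: Min_le)
      next
        case False
        then show ?thesis using ui unfolding Q_def by auto
      qed
    qed
    define \<beta> where "\<beta> k = (p k - \<mu>) / (2 * lam)" for k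
    have B: "\<beta> \<in> Bset u"
    proof -
      have "(u i = 0 \<longrightarrow> 0 \<le> \<beta> i) \<and> (0 < u i \<and> u i < 1 \<longrightarrow> \<beta> i = 0) \<and> (u i = 1 \<longrightarrow> \<beta> i \<le> 0)" for i
        using mu[of i] lam unfolding \<beta>_def by (auto simp: divide_nonpos_pos)
      then show ?thesis unfolding Bset_def by auto
    qed
    define M1 where "M1 = (\<Sum>k\<in>UNIV. m k)"
    define U where "U = (\<Sum>k\<in>UNIV. u k * m k)"
    have M1: "0 < M1" unfolding M1_def using pos
      by (intro sum_pos) auto
    have mU: "meanV w r u = U / M1" unfolding meanV_def massE U_def M1_def by simp
    have "(\<Sum>k\<in>UNIV. \<beta> k * m k) = (\<Sum>k\<in>UNIV. (lam * m k - 2 * lam * (u k * m k) + 2 * (u k * m k) - 2 * (h k * m k) - \<mu> * m k) / (2 * lam))"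
      unfolding \<beta>_def p_def by (intro sum.cong refl) (simp add: field_simps)
    also have "\<dots> = (lam * M1 - 2 * lam * U + 2 * U - 2 * (\<Sum>k\<in>UNIV. h k * m k) - \<mu> * M1) / (2 * lam)"
      unfolding sum_divide_distrib[symmetric] M1_def U_def
      by (simp add: sum_subtractf sum.distrib sum_distrib_left)
    also have "\<dots> = (lam * M1 - 2 * lam * U - \<mu> * M1) / (2 * lam)"
      unfolding hmass U_def by simp
    finally have mb: "meanV w r \<beta> = (lam * M1 - 2 * lam * U - \<mu> * M1) / (2 * lam) / M1"
      unfolding meanV_def massE by (simp add: M1_def)
    show ?thesis
    proof (intro bexI[OF _ B] allI)
      fix i
      show "u i - heat_op w r \<tau> un i - lam * u i + lam * meanV w r u = lam * \<beta> i - lam * meanV w r \<beta>"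
        unfolding mb mU h_def[symmetric] \<beta>_def p_def using lam M1
        by (simp add: field_simps)
    qed
  qed
qed

end
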